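(* Let $X$ be a finite set with $\ell=|X|\geq 2$ and let $D\leq D'\leq\mathrm{Sym}(X)$ be such that (a) $D$ is an essential subgroup of $D'$, and (b) $|D'|<(D':D)^{\ell}$. Then for every integer $k\geq 1$, the locally compact group $L(D,D')^k$ contains no lattice.
   Context: Let $\mathcal{R}_X$ be the rooted tree whose vertices are the finite words over $X$ (root = empty word, children of $w$ are $wx$, $x\in X$). For an automorphism $g$ of $\mathcal{R}_X$ and a vertex $w$, the local permutation $\sigma(g,w)\in\mathrm{Sym}(X)$ is defined by $g(wx)=g(w)\,\sigma(g,w)(x)$. Let $L_0=\{g:\sigma(g,w)\in D \text{ for all } w\}$ (the infinitely iterated wreath product $\cdots\wr D\wr D$, a profinite group with the topology of pointwise convergence on vertices), and for $n\geq0$ let $L_n=\{g:\sigma(g,w)\in D' \text{ for all } w \text{ and } \sigma(g,w)\in D \text{ whenever } w \text{ has length}\geq n\}$. $L(D,D')=\bigcup_n L_n$, endowed with the group topology making the inclusion $L_0\hookrightarrow L(D,D')$ continuous and open; it is a locally elliptic totally disconnected locally compact group. A subgroup $H$ of a group $G$ is essential if $H$ intersects every non-trivial subgroup of $G$ non-trivially. A lattice is a discrete subgroup of finite covolume. *)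

theory Defs
  imports "HOL-Analysis.Analysis"
begin

text \<open>The alphabet X is the finite type 'a (X = UNIV). A subgroup of Sym(X) is a set of
bijections containing id and closed under composition and inverse.\<close>

definition perm_group :: "('a \<Rightarrow> 'a) set \<Rightarrow> bool" where
  "perm_group H \<longleftrightarrow> H \<subseteq> {f. bij f} \<and> id \<in> H \<and>
     (\<forall>f\<in>H. \<forall>g\<in>H. f \<circ> g \<in> H) \<and> (\<forall>f\<in>H. inv f \<in> H)"

definition essential_subgroup :: "('a \<Rightarrow> 'a) set \<Rightarrow> ('a \<Rightarrow> 'a) set \<Rightarrow> bool" where
  "essential_subgroup D D' \<longleftrightarrow>
     (\<forall>H. perm_group H \<and> H \<subseteq> D' \<and> H \<noteq> {id} \<longrightarrow> H \<inter> D \<noteq> {id})"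

text \<open>Vertices of the rooted tree are words (lists) over 'a; children of w are w @ [x].\<close>

definition tree_aut :: "('a list \<Rightarrow> 'a list) \<Rightarrow> bool" where
  "tree_aut g \<longleftrightarrow> bij g \<and> g [] = [] \<and> (\<forall>w x. \<exists>y. g (w @ [x]) = g w @ [y])"

definition local_perm :: "('a list \<Rightarrow> 'a list) \<Rightarrow> 'a list \<Rightarrow> ('a \<Rightarrow> 'a)" where
  "local_perm g w = (\<lambda>x. last (g (w @ [x])))"

definition L0 :: "('a \<Rightarrow> 'a) set \<Rightarrow> ('a list \<Rightarrow> 'a list) set" where
  "L0 D = {g. tree_aut g \<and> (\<forall>w. local_perm g w \<in> D)}"

definition Ln :: "('a \<Rightarrow> 'a) set \<Rightarrow> ('a \<Rightarrow> 'a) set \<Rightarrow> nat \<Rightarrow> ('a list \<Rightarrow> 'a list) set" where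
  "Ln D D' n = {g. tree_aut g \<and> (\<forall>w. local_perm g w \<in> D') \<and>
                    (\<forall>w. n \<le> length w \<longrightarrow> local_perm g w \<in> D)}"

definition LDD :: "('a \<Rightarrow> 'a) set \<Rightarrow> ('a \<Rightarrow> 'a) set \<Rightarrow> ('a list \<Rightarrow> 'a list) set" where
  "LDD D D' = (\<Union>n. Ln D D' n)"

text \<open>An element of L(D,D')^k is a family f :: nat => tree automorphism with f i in L(D,D')
for i < k and f i = id for i >= k. Multiplication is componentwise composition.\<close>

definition Lpow :: "('a \<Rightarrow> 'a) set \<Rightarrow> ('a \<Rightarrow> 'a) set \<Rightarrow> nat \<Rightarrow> (nat \<Rightarrow> 'a list \<Rightarrow> 'a list) set" where
  "Lpow D D' k = {f. (\<forall>i<k. f i \<in> LDD D D') \<and> (\<forall>i. k \<le> i \<longrightarrow> f i = id)}"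

definition pmult :: "(nat \<Rightarrow> 'a list \<Rightarrow> 'a list) \<Rightarrow> (nat \<Rightarrow> 'a list \<Rightarrow> 'a list) \<Rightarrow> (nat \<Rightarrow> 'a list \<Rightarrow> 'a list)" where
  "pmult f g = (\<lambda>i. f i \<circ> g i)"

definition pinv :: "(nat \<Rightarrow> 'a list \<Rightarrow> 'a list) \<Rightarrow> (nat \<Rightarrow> 'a list \<Rightarrow> 'a list)" where
  "pinv f = (\<lambda>i. inv (f i))"

definition pone :: "nat \<Rightarrow> 'a list \<Rightarrow> 'a list" where
  "pone = (\<lambda>i. id)"

text \<open>V m = (pointwise stabiliser in L_0 of the ball of radius m)^k: a neighbourhood basis of
the identity consisting of compact open subgroups. V 0 = L_0^k.\<close>

definition Vnbhd :: "('a \<Rightarrow> 'a) set \<Rightarrow> nat \<Rightarrow> nat \<Rightarrow> (nat \<Rightarrow> 'a list \<Rightarrow> 'a list) set" where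
  "Vnbhd D k m = {f. (\<forall>i<k. f i \<in> L0 D \<and> (\<forall>w. length w \<le> m \<longrightarrow> f i w = w)) \<and>
                       (\<forall>i. k \<le> i \<longrightarrow> f i = id)}"

text \<open>The group topology on L(D,D')^k: L_0^k is open and carries the product of the topologies
of pointwise convergence on vertices; left translates of the V m form a basis.\<close>

definition Ltop :: "('a \<Rightarrow> 'a) set \<Rightarrow> ('a \<Rightarrow> 'a) set \<Rightarrow> nat \<Rightarrow> (nat \<Rightarrow> 'a list \<Rightarrow> 'a list) topology" where
  "Ltop D D' k = topology (\<lambda>S. S \<subseteq> Lpow D D' k \<and>
       (\<forall>g\<in>S. \<exists>m. pmult g ` Vnbhd D k m \<subseteq> S))"

definition is_subgroup :: "('a \<Rightarrow> 'a) set \<Rightarrow> ('a \<Rightarrow> 'a) set \<Rightarrow> nat \<Rightarrow> (nat \<Rightarrow> 'a list \<Rightarrow> 'a list) set \<Rightarrow> bool" where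
  "is_subgroup D D' k \<Gamma> \<longleftrightarrow> \<Gamma> \<subseteq> Lpow D D' k \<and> pone \<in> \<Gamma> \<and>
     (\<forall>f\<in>\<Gamma>. \<forall>g\<in>\<Gamma>. pmult f g \<in> \<Gamma>) \<and> (\<forall>f\<in>\<Gamma>. pinv f \<in> \<Gamma>)"

definition is_discrete :: "('a \<Rightarrow> 'a) set \<Rightarrow> ('a \<Rightarrow> 'a) set \<Rightarrow> nat \<Rightarrow> (nat \<Rightarrow> 'a list \<Rightarrow> 'a list) set \<Rightarrow> bool" where
  "is_discrete D D' k \<Gamma> \<longleftrightarrow> (\<forall>g\<in>\<Gamma>. \<exists>S. openin (Ltop D D' k) S \<and> S \<inter> \<Gamma> = {g})"

definition dcoset :: "('a \<Rightarrow> 'a) set \<Rightarrow> nat \<Rightarrow> (nat \<Rightarrow> 'a list \<Rightarrow> 'a list) set \<Rightarrow> (nat \<Rightarrow> 'a list \<Rightarrow> 'a list) \<Rightarrow> (nat \<Rightarrow> 'a list \<Rightarrow> 'a list) set" where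
  "dcoset D k \<Gamma> g = {pmult (pmult \<gamma> g) u | \<gamma> u. \<gamma> \<in> \<Gamma> \<and> u \<in> Vnbhd D k 0}"

definition dcosets :: "('a \<Rightarrow> 'a) set \<Rightarrow> ('a \<Rightarrow> 'a) set \<Rightarrow> nat \<Rightarrow> (nat \<Rightarrow> 'a list \<Rightarrow> 'a list) set \<Rightarrow> (nat \<Rightarrow> 'a list \<Rightarrow> 'a list) set set" where
  "dcosets D D' k \<Gamma> = dcoset D k \<Gamma> ` Lpow D D' k"

text \<open>Haar measure of the fundamental domain of Gamma inside the double coset Gamma g U,
normalised by mu(U) = 1: it equals 1 / |Gamma \<inter> g U g^-1|.\<close>
definition dcoset_mass :: "('a \<Rightarrow> 'a) set \<Rightarrow> ('a \<Rightarrow> 'a) set \<Rightarrow> nat \<Rightarrow> (nat \<Rightarrow> 'a list \<Rightarrow> 'a list) set \<Rightarrow> (nat \<Rightarrow> 'a list \<Rightarrow> 'a list) set \<Rightarrow> real" where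
  "dcoset_mass D D' k \<Gamma> C =
     (let g = (SOME g. g \<in> Lpow D D' k \<and> C = dcoset D k \<Gamma> g)
      in 1 / real (card (\<Gamma> \<inter> (\<lambda>u. pmult (pmult g u) (pinv g)) ` Vnbhd D k 0)))"

text \<open>Finite covolume: the (left) Haar measure of Gamma \ G, computed as the sum over
double cosets Gamma \ G / U, is finite.\<close>
definition finite_covolume :: "('a \<Rightarrow> 'a) set \<Rightarrow> ('a \<Rightarrow> 'a) set \<Rightarrow> nat \<Rightarrow> (nat \<Rightarrow> 'a list \<Rightarrow> 'a list) set \<Rightarrow> bool" where
  "finite_covolume D D' k \<Gamma> \<longleftrightarrow> dcoset_mass D D' k \<Gamma> summable_on dcosets D D' k \<Gamma>"

definition is_lattice :: "('a \<Rightarrow> 'a) set \<Rightarrow> ('a \<Rightarrow> 'a) set \<Rightarrow> nat \<Rightarrow> (nat \<Rightarrow> 'a list \<Rightarrow> 'a list) set \<Rightarrow> bool" where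
  "is_lattice D D' k \<Gamma> \<longleftrightarrow> is_subgroup D D' k \<Gamma> \<and> is_discrete D D' k \<Gamma> \<and> finite_covolume D D' k \<Gamma>"

end

theory Submission imports Defs begin

lemma tree_aut_snoc:
  assumes "tree_aut g" shows "g (w @ [x]) = g w @ [local_perm g w x]"
proof -
  obtain y where "g (w @ [x]) = g w @ [y]" using assms unfolding tree_aut_def by blast
  thus ?thesis unfolding local_perm_def by simp
qed

lemma tree_aut_length:
  assumes "tree_aut g" shows "length (g w) = length w"
proof (induction w rule: rev_induct)
  case Nil then show ?case using assms by (simp add: tree_aut_def)
next
  case (snoc x w) then show ?case using tree_aut_snoc[OF assms] by simp
qed

lemma tree_aut_bij: "tree_aut g \<Longrightarrow> bij g" by (simp add: tree_aut_def)

lemma local_perm_inj: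
  assumes "tree_aut g" shows "inj (local_perm g w)"
proof
  fix x y assume "local_perm g w x = local_perm g w y"
  then have "g (w @ [x]) = g (w @ [y])" using tree_aut_snoc[OF assms] by simp
  then have "w @ [x] = w @ [y]" using assms bij_is_inj unfolding tree_aut_def inj_def by blast
  thus "x = y" by simp
qed

lemma local_perm_bij:
  assumes "tree_aut g" shows "bij (local_perm (g::'a::finite list \<Rightarrow> _) w)"
  using local_perm_inj[OF assms] finite_UNIV_inj_surj[of "local_perm g w"] by (simp add: bij_def)

lemma tree_aut_comp:
  assumes "tree_aut g" "tree_aut h" shows "tree_aut (g \<circ> h)"
  unfolding tree_aut_def
proof (intro conjI allI)
  show "bij (g \<circ> h)" using assms bij_comp by (auto simp: tree_aut_def)
  show "(g \<circ> h) [] = []" using assms by (simp add: tree_aut_def)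
  fix w x show "\<exists>y. (g \<circ> h) (w @ [x]) = (g \<circ> h) w @ [y]"
    using tree_aut_snoc[OF assms(1)] tree_aut_snoc[OF assms(2)] by simp
qed

lemma local_perm_comp:
  assumes "tree_aut g" "tree_aut h"
  shows "local_perm (g \<circ> h) w = local_perm g (h w) \<circ> local_perm h w"
  using tree_aut_snoc[OF assms(1)] tree_aut_snoc[OF assms(2)]
  by (auto simp: local_perm_def)

lemma tree_aut_inv:
  assumes "tree_aut (g::'a::finite list \<Rightarrow> _)" shows "tree_aut (inv g)"
  and "local_perm (inv g) w = inv (local_perm g (inv g w))"
proof -
  have b: "bij g" using assms by (simp add: tree_aut_def)
  have sn: "inv g (w @ [x]) = inv g w @ [inv (local_perm g (inv g w)) x]" for w x
  proof -
    let ?v = "inv g w" let ?y = "inv (local_perm g ?v) x"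
    have "g (?v @ [?y]) = g ?v @ [local_perm g ?v ?y]" by (rule tree_aut_snoc[OF assms])
    also have "\<dots> = w @ [x]" using b local_perm_bij[OF assms, of ?v]
      by (simp add: bij_inv_eq_iff surj_f_inv_f bij_is_surj)
    finally show ?thesis using b by (metis bij_inv_eq_iff)
  qed
  show "tree_aut (inv g)" unfolding tree_aut_def
  proof (intro conjI allI)
    show "bij (inv g)" using b by (simp add: bij_imp_bij_inv)
    show "inv g [] = []" using assms b by (metis bij_inv_eq_iff tree_aut_def)
    fix w x show "\<exists>y. inv g (w @ [x]) = inv g w @ [y]" using sn by blast
  qed
  show "local_perm (inv g) w = inv (local_perm g (inv g w))"
    by (rule ext) (simp add: local_perm_def sn)
qed

lemma local_perm_id: "local_perm id w = id"
  by (rule ext) (simp add: local_perm_def)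

lemma tree_aut_id: "tree_aut id" by (simp add: tree_aut_def)


lemma perm_groupD:
  assumes "perm_group H"
  shows "\<And>f. f \<in> H \<Longrightarrow> bij f" "id \<in> H" "\<And>f g. f \<in> H \<Longrightarrow> g \<in> H \<Longrightarrow> f \<circ> g \<in> H"
    "\<And>f. f \<in> H \<Longrightarrow> inv f \<in> H"
  using assms unfolding perm_group_def by auto

lemma Ln_comp:
  assumes "perm_group D" "perm_group D'" "g \<in> Ln D D' n" "h \<in> Ln D D' n"
  shows "g \<circ> h \<in> Ln D D' n"
proof -
  have t: "tree_aut g" "tree_aut h" using assms by (auto simp: Ln_def)
  show ?thesis unfolding Ln_def
  proof (intro CollectI conjI allI impI)
    show "tree_aut (g \<circ> h)" using tree_aut_comp[OF t] .
    fix w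
    show "local_perm (g \<circ> h) w \<in> D'" unfolding local_perm_comp[OF t]
      using assms perm_groupD(3)[OF assms(2)] by (auto simp: Ln_def)
    assume "n \<le> length w"
    then show "local_perm (g \<circ> h) w \<in> D" unfolding local_perm_comp[OF t]
      using assms perm_groupD(3)[OF assms(1)] tree_aut_length[OF t(2)] by (auto simp: Ln_def)
  qed
qed

lemma Ln_inv:
  fixes g :: "'a::finite list \<Rightarrow> 'a list"
  assumes "perm_group D" "perm_group D'" "g \<in> Ln D D' n"
  shows "inv g \<in> Ln D D' n"
proof -
  have t: "tree_aut g" using assms by (simp add: Ln_def)
  have l: "length (inv g w) = length w" for w using tree_aut_length[OF tree_aut_inv(1)[OF t]] .
  show ?thesis unfolding Ln_def
  proof (intro CollectI conjI allI impI)
    show "tree_aut (inv g)" using tree_aut_inv(1)[OF t] .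
    fix w
    show "local_perm (inv g) w \<in> D'" unfolding tree_aut_inv(2)[OF t]
      using assms(3) perm_groupD(4)[OF assms(2)] by (auto simp: Ln_def)
    assume "n \<le> length w"
    then show "local_perm (inv g) w \<in> D" unfolding tree_aut_inv(2)[OF t]
      using assms(3) perm_groupD(4)[OF assms(1)] l by (auto simp: Ln_def)
  qed
qed

lemma Ln_id: "perm_group D \<Longrightarrow> perm_group D' \<Longrightarrow> id \<in> Ln D D' n"
  by (simp add: Ln_def tree_aut_id local_perm_id perm_groupD)

lemma L0_Ln: "L0 D = Ln D D 0"
  by (auto simp: L0_def Ln_def)

lemma L0_sub_Ln: "D \<subseteq> D' \<Longrightarrow> L0 D \<subseteq> Ln D D' n"
  by (auto simp: L0_def Ln_def)

lemma Ln_mono: "n \<le> n' \<Longrightarrow> Ln D D' n \<subseteq> Ln D D' n'"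
  by (auto simp: Ln_def)

lemma Ln_tree_aut: "g \<in> Ln D D' n \<Longrightarrow> tree_aut g" by (simp add: Ln_def)

definition port :: "('a list \<Rightarrow> 'a \<Rightarrow> 'a) \<Rightarrow> 'a list \<Rightarrow> 'a list" where
  "port \<tau> w = map (\<lambda>j. \<tau> (take j w) (w ! j)) [0..<length w]"

lemma port_Nil[simp]: "port \<tau> [] = []" by (simp add: port_def)

lemma port_length[simp]: "length (port \<tau> w) = length w" by (simp add: port_def)

lemma port_snoc[simp]: "port \<tau> (w @ [x]) = port \<tau> w @ [\<tau> w x]"
proof -
  have u: "[0..<length (w @ [x])] = [0..<length w] @ [length w]" by simp
  have "map (\<lambda>j. \<tau> (take j (w @ [x])) ((w @ [x]) ! j)) [0..<length w]
        = map (\<lambda>j. \<tau> (take j w) (w ! j)) [0..<length w]"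
    by (rule map_cong) (auto simp: nth_append)
  then show ?thesis unfolding port_def u by simp
qed

lemma port_cong:
  assumes "\<And>j. j < length w \<Longrightarrow> \<tau> (take j w) = \<tau>' (take j w)"
  shows "port \<tau> w = port \<tau>' w"
  using assms by (simp add: port_def)

lemma port_inj:
  assumes "\<And>v. inj (\<tau> v)" shows "inj (port \<tau>)"
proof -
  have "\<forall>v. port \<tau> u = port \<tau> v \<longrightarrow> u = v" for u
  proof (induction u rule: rev_induct)
    case Nil
    show ?case
    proof (intro allI impI)
      fix v assume "port \<tau> [] = port \<tau> v"
      then have "length v = 0" by (metis port_length list.size(3))
      thus "[] = v" by simp
    qed
  next
    case (snoc x u)
    show ?case
    proof (intro allI impI)
      fix v assume e: "port \<tau> (u @ [x]) = port \<tau> v"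
      have "length v = Suc (length u)" using arg_cong[OF e, of length] by simp
      then obtain v' y where v: "v = v' @ [y]"
        by (cases v rule: rev_cases) auto
      from e have "port \<tau> u = port \<tau> v'" "\<tau> u x = \<tau> v' y" by (auto simp: v)
      with snoc.IH have "u = v'" by blast
      with \<open>\<tau> u x = \<tau> v' y\<close> assms have "x = y" by (simp add: inj_eq)
      thus "u @ [x] = v" using \<open>u = v'\<close> v by simp
    qed
  qed
  thus ?thesis by (simp add: inj_def)
qed

lemma port_surj:
  assumes "\<And>v. surj (\<tau> v)" shows "surj (port \<tau>)"
proof -
  have "\<exists>w. port \<tau> w = y" for y
  proof (induction y rule: rev_induct)
    case Nil then show ?case by (rule exI[of _ "[]"]) simp
  next
    case (snoc b y)
    then obtain w where w: "port \<tau> w = y" by blast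
    obtain x where "b = \<tau> w x" using assms[of w] by (rule surjE)
    then show ?case using w by (intro exI[of _ "w @ [x]"]) simp
  qed
  then have "\<forall>y. \<exists>w. y = port \<tau> w" by metis
  thus ?thesis by (simp add: surj_def)
qed

lemma port_tree_aut:
  assumes "\<And>v. bij (\<tau> v)" shows "tree_aut (port \<tau>)"
proof -
  have "inj (port \<tau>)" by (rule port_inj) (rule bij_is_inj[OF assms])
  moreover have "surj (port \<tau>)" by (rule port_surj) (rule bij_is_surj[OF assms])
  ultimately show ?thesis unfolding tree_aut_def by (simp add: bij_def)
qed

lemma port_local_perm: "local_perm (port \<tau>) w = \<tau> w"
  by (rule ext) (simp add: local_perm_def)


lemma pmult_apply[simp]: "pmult f g i = f i \<circ> g i" by (simp add: pmult_def)
lemma pinv_apply[simp]: "pinv f i = inv (f i)" by (simp add: pinv_def)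
lemma pone_apply[simp]: "pone i = id" by (simp add: pone_def)

lemma pmult_pone_left[simp]: "pmult pone f = f" by (rule ext) simp

lemma Lpow_id: "f \<in> Lpow D D' k \<Longrightarrow> k \<le> i \<Longrightarrow> f i = id" by (simp add: Lpow_def)

lemma Lpow_tree: "f \<in> Lpow D D' k \<Longrightarrow> i < k \<Longrightarrow> tree_aut (f i)"
  by (auto simp: Lpow_def LDD_def Ln_def)

lemma Lpow_bij: "f \<in> Lpow D D' k \<Longrightarrow> bij (f i)"
  by (cases "i < k") (auto simp: Lpow_id Lpow_tree tree_aut_bij bij_id[unfolded id_def])

lemma Vnbhd_anti: "m \<le> m' \<Longrightarrow> Vnbhd D k m' \<subseteq> Vnbhd D k m"
  by (auto simp: Vnbhd_def)

lemma openin_Ltop: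
  "openin (Ltop D D' k) S \<longleftrightarrow> S \<subseteq> Lpow D D' k \<and> (\<forall>g\<in>S. \<exists>m. pmult g ` Vnbhd D k m \<subseteq> S)"
proof -
  let ?P = "\<lambda>S. S \<subseteq> Lpow D D' k \<and> (\<forall>g\<in>S. \<exists>m. pmult g ` Vnbhd D k m \<subseteq> S)"
  have "istopology ?P" unfolding istopology_def
  proof (rule conjI; intro allI impI)
    fix S T assume S: "?P S" and T: "?P T"
    show "?P (S \<inter> T)"
    proof (intro conjI ballI)
      show "S \<inter> T \<subseteq> Lpow D D' k" using S by blast
      fix g assume g: "g \<in> S \<inter> T"
      then obtain m1 m2 where m1: "pmult g ` Vnbhd D k m1 \<subseteq> S" and m2: "pmult g ` Vnbhd D k m2 \<subseteq> T"
        using S T by blast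
      have "Vnbhd D k (max m1 m2) \<subseteq> Vnbhd D k m1" "Vnbhd D k (max m1 m2) \<subseteq> Vnbhd D k m2"
        by (simp_all add: Vnbhd_anti)
      then show "\<exists>m. pmult g ` Vnbhd D k m \<subseteq> S \<inter> T" using m1 m2 by blast
    qed
  next
    fix K assume K: "\<forall>S\<in>K. ?P S"
    show "?P (\<Union>K)"
    proof (intro conjI ballI)
      show "\<Union>K \<subseteq> Lpow D D' k" using K by blast
      fix g assume "g \<in> \<Union>K"
      then obtain S where "S \<in> K" "g \<in> S" by blast
      then obtain m where "pmult g ` Vnbhd D k m \<subseteq> S" using K by blast
      then show "\<exists>m. pmult g ` Vnbhd D k m \<subseteq> \<Union>K" using \<open>S \<in> K\<close> by blast
    qed
  qed
  then show ?thesis unfolding Ltop_def by simp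
qed

lemma discrete_nbhd:
  assumes "is_subgroup D D' k \<Gamma>" "is_discrete D D' k \<Gamma>"
  shows "\<exists>m. \<forall>\<delta>\<in>\<Gamma>. \<delta> \<in> Vnbhd D k m \<longrightarrow> \<delta> = pone"
proof -
  have "pone \<in> \<Gamma>" using assms by (simp add: is_subgroup_def)
  then obtain S where S: "openin (Ltop D D' k) S" "S \<inter> \<Gamma> = {pone}"
    using assms(2) unfolding is_discrete_def by blast
  then have "pone \<in> S" by blast
  then obtain m where "pmult pone ` Vnbhd D k m \<subseteq> S" using S(1) openin_Ltop by blast
  then have "Vnbhd D k m \<subseteq> S" by simp
  then show ?thesis using S(2) by blast
qed


lemma local_perm_fix:
  assumes "tree_aut g" "g w = w" "g (w @ [x]) = w @ [x]"
  shows "local_perm g w x = x"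
  using assms(3) by (simp add: local_perm_def)

lemma inv_fix: "bij g \<Longrightarrow> g w = w \<Longrightarrow> inv g w = w"
  by (simp add: bij_is_inj inv_f_eq)

definition lev :: "nat \<Rightarrow> 'a list set" where "lev n = {w. length w < n}"

lemma finite_lev: "finite (lev n :: 'a::finite list set)"
proof -
  have "lev n \<subseteq> {xs :: 'a list. set xs \<subseteq> UNIV \<and> length xs \<le> n}" by (auto simp: lev_def)
  then show ?thesis using finite_lists_length_le[of "UNIV :: 'a set" n] finite_subset by auto
qed

lemma agree:
  assumes "tree_aut g" "tree_aut g'" "\<And>w. length w < N \<Longrightarrow> local_perm g w = local_perm g' w"
  shows "length w \<le> N \<Longrightarrow> g w = g' w"
proof (induction w rule: rev_induct)
  case Nil then show ?case using assms by (simp add: tree_aut_def)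
next
  case (snoc x w)
  then have "g w = g' w" "local_perm g w = local_perm g' w" using assms(3) by auto
  then show ?case using tree_aut_snoc[OF assms(1)] tree_aut_snoc[OF assms(2)] by simp
qed

lemma inv_comp_id: "bij f \<Longrightarrow> inv f \<circ> g = id \<Longrightarrow> g = f"
proof (rule ext)
  fix x assume b: "bij f" and e: "inv f \<circ> g = id"
  have "inv f (g x) = x" using fun_cong[OF e, of x] by simp
  then have "f (inv f (g x)) = f x" by simp
  then show "g x = f x" using b by (simp add: bij_is_surj surj_f_inv_f)
qed

lemma bij_comp_inv: "bij f \<Longrightarrow> f \<circ> inv f = id"
  by (metis bij_is_surj surj_iff)

lemma bij_inv_comp: "bij f \<Longrightarrow> inv f \<circ> f = id"
  by (simp add: bij_is_inj)

lemma lev_Suc: "lev (Suc n) = insert [] ((\<lambda>p. fst p # snd p) ` (UNIV \<times> lev n))"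
proof (rule set_eqI)
  fix w :: "'a list"
  show "w \<in> lev (Suc n) \<longleftrightarrow> w \<in> insert [] ((\<lambda>p. fst p # snd p) ` (UNIV \<times> lev n))"
    by (cases w) (auto simp: lev_def image_iff)
qed

lemma card_lev_Suc: "card (lev (Suc n) :: 'a::finite list set) = 1 + CARD('a) * card (lev n :: 'a list set)"
proof -
  have inj: "inj_on (\<lambda>p. fst p # snd p) (UNIV \<times> (lev n :: 'a list set))"
    by (auto simp: inj_on_def)
  have fin: "finite ((\<lambda>p. fst p # snd p) ` (UNIV \<times> (lev n :: 'a list set)))"
    using finite_lev[where 'a='a, of n] by simp
  have "[] \<notin> (\<lambda>p. fst p # snd p) ` (UNIV \<times> (lev n :: 'a list set))" by auto
  then have "card (lev (Suc n) :: 'a list set) = Suc (card ((\<lambda>p. fst p # snd p) ` (UNIV \<times> (lev n :: 'a list set))))"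
    unfolding lev_Suc using fin by simp
  also have "\<dots> = Suc (CARD('a) * card (lev n :: 'a list set))"
    using card_image[OF inj] by (simp add: card_cartesian_product)
  finally show ?thesis by simp
qed

lemma card_lev_ge: "n \<le> card (lev n :: 'a::finite list set)"
proof (induction n)
  case 0 then show ?case by simp
next
  case (Suc n)
  have "CARD('a) \<ge> 1" by (simp add: Suc_leI)
  then have "card (lev n :: 'a list set) \<le> CARD('a) * card (lev n :: 'a list set)" by simp
  then show ?case using Suc card_lev_Suc[where 'a='a, of n] by linarith
qed

lemma coset_reps:
  fixes D D' :: "('a::finite \<Rightarrow> 'a) set"
  assumes pgD: "perm_group D" and pgD': "perm_group D'" and DD': "D \<subseteq> D'"
  shows "\<exists>Q. Q \<subseteq> D' \<and> finite Q \<and> card D' div card D \<le> card Q \<and>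
           (\<forall>q1\<in>Q. \<forall>q2\<in>Q. \<forall>\<delta>\<in>D. q2 = q1 \<circ> \<delta> \<longrightarrow> q1 = q2)"
proof -
  define cos where "cos q = (\<lambda>\<delta>. q \<circ> \<delta>) ` D" for q :: "'a \<Rightarrow> 'a"
  define CS where "CS = cos ` D'"
  have finD': "finite D'" and finD: "finite D" by (auto intro: finite_subset)
  have finCS: "finite CS" unfolding CS_def using finD' by simp
  have cardcos: "card (cos q) = card D" if "q \<in> D'" for q
  proof -
    have b: "bij q" using perm_groupD(1)[OF pgD'] that .
    have "inj_on (\<lambda>\<delta>. q \<circ> \<delta>) D"
    proof
      fix x y assume "q \<circ> x = q \<circ> y"
      then show "x = y" using b by (metis bij_is_inj fun.inj_map_strong inj_eq)
    qed
    then show ?thesis unfolding cos_def by (simp add: card_image)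
  qed
  have cov: "D' \<subseteq> \<Union>CS"
  proof
    fix q assume "q \<in> D'"
    then have "q \<in> cos q" unfolding cos_def using perm_groupD(2)[OF pgD]
      by (metis comp_id image_eqI)
    then show "q \<in> \<Union>CS" unfolding CS_def using \<open>q \<in> D'\<close> by blast
  qed
  have finU: "finite (\<Union>CS)" by (auto intro: finite_subset)
  have "card D' \<le> card (\<Union>CS)" using card_mono[OF finU cov] .
  also have "\<dots> \<le> sum card CS" by (rule card_Union_le_sum_card)
  also have "\<dots> = sum (\<lambda>_. card D) CS" using cardcos unfolding CS_def by (intro sum.cong) auto
  also have "\<dots> = card CS * card D" by simp
  finally have le: "card D' \<le> card CS * card D" .
  have Dpos: "card D > 0" using finD perm_groupD(2)[OF pgD] card_gt_0_iff by blast
  have divle: "card D' div card D \<le> card CS"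
    using div_le_mono[OF le, of "card D"] Dpos by simp
  define rep where "rep C = (SOME q. q \<in> D' \<and> C = cos q)" for C
  have rep: "rep C \<in> D' \<and> C = cos (rep C)" if "C \<in> CS" for C
  proof -
    have "\<exists>q. q \<in> D' \<and> C = cos q" using that unfolding CS_def by blast
    then show ?thesis unfolding rep_def by (rule someI_ex)
  qed
  have injrep: "inj_on rep CS" by (metis inj_onI rep)
  define Q where "Q = rep ` CS"
  have cosmul: "cos (q \<circ> \<delta>) = cos q" if "\<delta> \<in> D" for q \<delta>
  proof (rule set_eqI)
    fix x
    have bd: "bij \<delta>" using perm_groupD(1)[OF pgD] that .
    show "x \<in> cos (q \<circ> \<delta>) \<longleftrightarrow> x \<in> cos q"
    proof
      assume "x \<in> cos (q \<circ> \<delta>)"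
      then obtain d where "d \<in> D" "x = q \<circ> \<delta> \<circ> d" unfolding cos_def by blast
      moreover have "\<delta> \<circ> d \<in> D" using perm_groupD(3)[OF pgD that \<open>d \<in> D\<close>] .
      ultimately show "x \<in> cos q" unfolding cos_def by (metis comp_assoc image_eqI)
    next
      assume "x \<in> cos q"
      then obtain d where d: "d \<in> D" "x = q \<circ> d" unfolding cos_def by blast
      have "inv \<delta> \<circ> d \<in> D" using perm_groupD(3)[OF pgD perm_groupD(4)[OF pgD that] d(1)] .
      moreover have "q \<circ> \<delta> \<circ> (inv \<delta> \<circ> d) = x"
      proof -
        have "\<delta> \<circ> inv \<delta> = id" using bd by (rule bij_comp_inv)
        then have "\<delta> \<circ> (inv \<delta> \<circ> d) = d" by (metis comp_assoc id_comp)
        then show ?thesis using d(2) by (simp add: comp_assoc)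
      qed
      ultimately show "x \<in> cos (q \<circ> \<delta>)" unfolding cos_def by (metis image_eqI)
    qed
  qed
  show ?thesis
  proof (intro exI conjI ballI impI)
    show "Q \<subseteq> D'" unfolding Q_def using rep by blast
    show "finite Q" unfolding Q_def using finCS by simp
    show "card D' div card D \<le> card Q" unfolding Q_def using card_image[OF injrep] divle by simp
    fix q1 q2 \<delta> assume q: "q1 \<in> Q" "q2 \<in> Q" "\<delta> \<in> D" "q2 = q1 \<circ> \<delta>"
    then obtain C1 C2 where C: "C1 \<in> CS" "C2 \<in> CS" "q1 = rep C1" "q2 = rep C2" unfolding Q_def by blast
    have "C2 = cos q2" using rep C by blast
    also have "\<dots> = cos q1" using cosmul q by simp
    also have "\<dots> = C1" using rep C by metis
    finally show "q1 = q2" using C by simp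
  qed
qed

lemma inv_comp_cancel: "bij f \<Longrightarrow> inv f \<circ> (f \<circ> h) = h"
  by (metis bij_inv_comp comp_assoc id_comp)

lemma comp_inv_cancel: "bij f \<Longrightarrow> f \<circ> (inv f \<circ> h) = h"
  by (metis bij_comp_inv comp_assoc id_comp)

lemma V_bij: "u \<in> Vnbhd D k m \<Longrightarrow> bij (u i)"
  by (cases "i < k") (auto simp: Vnbhd_def L0_def tree_aut_bij bij_id[unfolded id_def])

lemma V_L0: "u \<in> Vnbhd D k m \<Longrightarrow> i < k \<Longrightarrow> u i \<in> L0 D"
  by (simp add: Vnbhd_def)

lemma V_id: "u \<in> Vnbhd D k m \<Longrightarrow> k \<le> i \<Longrightarrow> u i = id"
  by (simp add: Vnbhd_def)

locale ctx =
  fixes D D' :: "('a::finite \<Rightarrow> 'a) set" and k :: nat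
    and \<Gamma> :: "(nat \<Rightarrow> 'a list \<Rightarrow> 'a list) set"
  assumes pgD: "perm_group D" and pgD': "perm_group D'" and DD': "D \<subseteq> D'"
    and ess: "essential_subgroup D D'" and sg: "is_subgroup D D' k \<Gamma>"
begin

lemma G_Lpow: "\<gamma> \<in> \<Gamma> \<Longrightarrow> \<gamma> \<in> Lpow D D' k" using sg by (auto simp: is_subgroup_def)
lemma G_mult: "\<gamma> \<in> \<Gamma> \<Longrightarrow> \<delta> \<in> \<Gamma> \<Longrightarrow> pmult \<gamma> \<delta> \<in> \<Gamma>" using sg by (auto simp: is_subgroup_def)
lemma G_inv: "\<gamma> \<in> \<Gamma> \<Longrightarrow> pinv \<gamma> \<in> \<Gamma>" using sg by (auto simp: is_subgroup_def)
lemma G_one: "pone \<in> \<Gamma>" using sg by (auto simp: is_subgroup_def)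

definition FX :: "nat \<Rightarrow> (nat \<Rightarrow> 'a list \<Rightarrow> 'a list) \<Rightarrow> bool" where
  "FX n \<delta> \<longleftrightarrow> (\<forall>i<k. \<delta> i \<in> Ln D D' (Suc n) \<and> (\<forall>w. length w \<le> n \<longrightarrow> \<delta> i w = w))"

lemma FX_mult:
  assumes "FX n \<delta>" "FX n \<delta>'" shows "FX n (pmult \<delta> \<delta>')"
  unfolding FX_def
proof (intro allI impI conjI)
  fix i and w :: "'a list" assume i: "i < k"
  show "pmult \<delta> \<delta>' i \<in> Ln D D' (Suc n)"
    using assms i Ln_comp[OF pgD pgD'] unfolding FX_def pmult_apply by blast
  assume "length w \<le> n"
  then show "pmult \<delta> \<delta>' i w = w" using assms i unfolding FX_def by simp
qed

lemma FX_inv: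
  assumes "FX n \<delta>" shows "FX n (pinv \<delta>)"
  unfolding FX_def
proof (intro allI impI conjI)
  fix i and w :: "'a list" assume i: "i < k"
  show "pinv \<delta> i \<in> Ln D D' (Suc n)"
    using assms i Ln_inv[OF pgD pgD'] unfolding FX_def pinv_apply by blast
  assume "length w \<le> n"
  then have "\<delta> i w = w" using assms i unfolding FX_def by blast
  moreover have "bij (\<delta> i)" using assms i unfolding FX_def using Ln_tree_aut tree_aut_bij by blast
  ultimately show "pinv \<delta> i w = w" by (simp add: inv_fix)
qed

lemma FX_one: "FX n pone"
  unfolding FX_def using Ln_id[OF pgD pgD'] by simp

lemma FX_tree: "FX n \<delta> \<Longrightarrow> i < k \<Longrightarrow> tree_aut (\<delta> i)"
  unfolding FX_def using Ln_tree_aut by blast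

lemma FX_lp_mult:
  assumes "FX n \<delta>" "FX n \<delta>'" "i < k" "length w \<le> n"
  shows "local_perm (pmult \<delta> \<delta>' i) w = local_perm (\<delta> i) w \<circ> local_perm (\<delta>' i) w"
proof -
  have "\<delta>' i w = w" using assms(2,3,4) unfolding FX_def by simp
  then show ?thesis using local_perm_comp[OF FX_tree[OF assms(1,3)] FX_tree[OF assms(2,3)]] by simp
qed

lemma FX_lp_inv:
  assumes "FX n \<delta>" "i < k" "length w \<le> n"
  shows "local_perm (pinv \<delta> i) w = inv (local_perm (\<delta> i) w)"
proof -
  have "\<delta> i w = w" using assms unfolding FX_def by simp
  then have "inv (\<delta> i) w = w" using inv_fix[OF tree_aut_bij[OF FX_tree[OF assms(1,2)]]] by simp
  then show ?thesis using tree_aut_inv(2)[OF FX_tree[OF assms(1,2)]] by simp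
qed

lemma kernel_trivial:
  assumes mp: "\<forall>\<delta>\<in>\<Gamma>. \<delta> \<in> Vnbhd D k m \<longrightarrow> \<delta> = pone" and mn: "m \<le> n"
  shows "\<delta> \<in> \<Gamma> \<Longrightarrow> FX n \<delta> \<Longrightarrow> \<delta> = pone"
proof -
  define Vall where "Vall = {p :: nat \<times> 'a list. fst p < k \<and> length (snd p) = n}"
  have finV: "finite Vall"
  proof -
    have "Vall \<subseteq> {..<k} \<times> {w :: 'a list. length w = n}" by (auto simp: Vall_def)
    moreover have "finite {w :: 'a list. length w = n}"
      using finite_lists_length_eq[of "UNIV :: 'a set"] by simp
    ultimately show ?thesis by (meson finite_SigmaI finite_lessThan finite_subset)
  qed
  have base: "\<delta> = pone" if d: "\<delta> \<in> \<Gamma>" "FX n \<delta>" "\<forall>p\<in>Vall. local_perm (\<delta> (fst p)) (snd p) \<in> D" for \<delta>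
  proof -
    have B: "\<forall>i. k \<le> i \<longrightarrow> \<delta> i = id" using Lpow_id G_Lpow d by blast
    have "\<forall>i<k. \<delta> i \<in> L0 D \<and> (\<forall>w. length w \<le> m \<longrightarrow> \<delta> i w = w)"
    proof (intro allI impI)
      fix i assume i: "i < k"
      have t: "tree_aut (\<delta> i)" using FX_tree d i by blast
      have fx: "\<And>w. length w \<le> n \<Longrightarrow> \<delta> i w = w" using d(2) i unfolding FX_def by blast
      have W: "\<forall>w. length w \<le> m \<longrightarrow> \<delta> i w = w" using fx mn by simp
      have "\<delta> i \<in> L0 D" unfolding L0_def
      proof (intro CollectI conjI allI t)
        fix w :: "'a list"
        consider "length w < n" | "length w = n" | "Suc n \<le> length w" by linarith
        then show "local_perm (\<delta> i) w \<in> D"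
        proof cases
          case 1
          have "local_perm (\<delta> i) w = id"
            by (rule ext) (simp add: local_perm_fix[OF t] fx 1 less_imp_le Suc_leI)
          then show ?thesis using perm_groupD(2)[OF pgD] by simp
        next
          case 2 then show ?thesis using d(3) i by (auto simp: Vall_def)
        next
          case 3 then show ?thesis using d(2) i by (auto simp: FX_def Ln_def)
        qed
      qed
      then show "\<delta> i \<in> L0 D \<and> (\<forall>w. length w \<le> m \<longrightarrow> \<delta> i w = w)" using W by blast
    qed
    then have "\<delta> \<in> Vnbhd D k m" using B by (simp add: Vnbhd_def)
    then show ?thesis using mp d by blast
  qed
  have main: "\<forall>\<delta>\<in>\<Gamma>. FX n \<delta> \<and> (\<forall>p\<in>Vall - T. local_perm (\<delta> (fst p)) (snd p) \<in> D) \<longrightarrow> \<delta> = pone"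
    if "finite T" for T
    using that
  proof (induction T rule: finite_induct)
    case empty then show ?case using base by (metis Diff_empty)
  next
    case (insert v T)
    show ?case
    proof (intro ballI impI)
      fix \<delta>0 assume d0: "\<delta>0 \<in> \<Gamma>" "FX n \<delta>0 \<and> (\<forall>p\<in>Vall - insert v T. local_perm (\<delta>0 (fst p)) (snd p) \<in> D)"
      show "\<delta>0 = pone"
      proof (cases "v \<in> Vall")
        case False
        then have "Vall - insert v T = Vall - T" by blast
        then have "\<forall>p\<in>Vall - T. local_perm (\<delta>0 (fst p)) (snd p) \<in> D" using d0 by simp
        then show ?thesis using insert.IH d0 by (meson)
      next
        case True
        obtain i0 w0 where v: "v = (i0, w0)" by fastforce
        have i0: "i0 < k" and w0: "length w0 = n" using True v by (auto simp: Vall_def)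
        define Kset where "Kset = {\<delta>\<in>\<Gamma>. FX n \<delta> \<and> (\<forall>p\<in>Vall - insert v T. local_perm (\<delta> (fst p)) (snd p) \<in> D)}"
        define H where "H = (\<lambda>\<delta>. local_perm (\<delta> i0) w0) ` Kset"
        have K_mult: "pmult \<delta> \<delta>' \<in> Kset" if "\<delta> \<in> Kset" "\<delta>' \<in> Kset" for \<delta> \<delta>'
        proof -
          have "local_perm (pmult \<delta> \<delta>' (fst p)) (snd p) \<in> D" if p: "p \<in> Vall - insert v T" for p
          proof -
            have "fst p < k" "length (snd p) \<le> n" using p by (auto simp: Vall_def)
            then show ?thesis using FX_lp_mult[of n \<delta> \<delta>' "fst p" "snd p"] \<open>\<delta> \<in> Kset\<close> \<open>\<delta>' \<in> Kset\<close> p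
                perm_groupD(3)[OF pgD] unfolding Kset_def by auto
          qed
          then show ?thesis using that G_mult FX_mult unfolding Kset_def by auto
        qed
        have K_inv: "pinv \<delta> \<in> Kset" if "\<delta> \<in> Kset" for \<delta>
        proof -
          have "local_perm (pinv \<delta> (fst p)) (snd p) \<in> D" if p: "p \<in> Vall - insert v T" for p
          proof -
            have "fst p < k" "length (snd p) \<le> n" using p by (auto simp: Vall_def)
            then show ?thesis using FX_lp_inv[of n \<delta> "fst p" "snd p"] \<open>\<delta> \<in> Kset\<close> p
                perm_groupD(4)[OF pgD] unfolding Kset_def by auto
          qed
          then show ?thesis using that G_inv FX_inv unfolding Kset_def by auto
        qed
        have K_one: "pone \<in> Kset" unfolding Kset_def using G_one FX_one
          by (simp add: local_perm_id perm_groupD(2)[OF pgD])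
        have IHK: "\<delta> = pone" if "\<delta> \<in> Kset" "local_perm (\<delta> i0) w0 \<in> D" for \<delta>
        proof -
          have "\<forall>p\<in>Vall - T. local_perm (\<delta> (fst p)) (snd p) \<in> D"
            using that v unfolding Kset_def by auto
          then show ?thesis using insert.IH that(1) unfolding Kset_def by blast
        qed
        have pgH: "perm_group H" unfolding perm_group_def
        proof (intro conjI ballI subsetI)
          fix f assume "f \<in> H"
          then obtain \<delta> where "\<delta> \<in> Kset" "f = local_perm (\<delta> i0) w0" unfolding H_def by blast
          then show "f \<in> {f. bij f}" using local_perm_bij FX_tree i0 unfolding Kset_def by blast
        next
          show "id \<in> H" unfolding H_def using K_one by (force simp: local_perm_id)
        next
          fix f g assume "f \<in> H" "g \<in> H"
          then obtain \<delta> \<delta>' where "\<delta> \<in> Kset" "f = local_perm (\<delta> i0) w0"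
            "\<delta>' \<in> Kset" "g = local_perm (\<delta>' i0) w0" unfolding H_def by blast
          then have "f \<circ> g = local_perm (pmult \<delta> \<delta>' i0) w0"
            using FX_lp_mult[of n \<delta> \<delta>' i0 w0] i0 w0 unfolding Kset_def by auto
          then show "f \<circ> g \<in> H" unfolding H_def using K_mult \<open>\<delta> \<in> Kset\<close> \<open>\<delta>' \<in> Kset\<close> by blast
        next
          fix f assume "f \<in> H"
          then obtain \<delta> where "\<delta> \<in> Kset" "f = local_perm (\<delta> i0) w0" unfolding H_def by blast
          then have "inv f = local_perm (pinv \<delta> i0) w0"
            using FX_lp_inv[of n \<delta> i0 w0] i0 w0 unfolding Kset_def by auto
          then show "inv f \<in> H" unfolding H_def using K_inv \<open>\<delta> \<in> Kset\<close> by blast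
        qed
        have HD': "H \<subseteq> D'"
        proof
          fix f assume "f \<in> H"
          then obtain \<delta> where "\<delta> \<in> Kset" "f = local_perm (\<delta> i0) w0" unfolding H_def by blast
          then show "f \<in> D'" using i0 G_Lpow unfolding Kset_def FX_def Ln_def by auto
        qed
        show ?thesis
        proof (rule ccontr)
          assume ne: "\<delta>0 \<noteq> pone"
          have k0: "\<delta>0 \<in> Kset" using d0 unfolding Kset_def by blast
          have "local_perm (\<delta>0 i0) w0 \<notin> D" using IHK[OF k0] ne by blast
          then have "local_perm (\<delta>0 i0) w0 \<noteq> id" using perm_groupD(2)[OF pgD] by metis
          moreover have "local_perm (\<delta>0 i0) w0 \<in> H" unfolding H_def using k0 by blast
          ultimately have "H \<noteq> {id}" by blast
          then have "H \<inter> D \<noteq> {id}" using ess pgH HD' unfolding essential_subgroup_def by blast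
          moreover have "id \<in> H \<inter> D" using pgH perm_groupD(2)[OF pgD] perm_groupD(2) by blast
          ultimately obtain h where h: "h \<in> H" "h \<in> D" "h \<noteq> id" by blast
          then obtain \<delta>1 where d1: "\<delta>1 \<in> Kset" "h = local_perm (\<delta>1 i0) w0" unfolding H_def by blast
          then have "\<delta>1 = pone" using IHK h by blast
          then have "h = id" using d1 by (simp add: local_perm_id)
          then show False using h by blast
        qed
      qed
    qed
  qed
  show "\<delta> \<in> \<Gamma> \<Longrightarrow> FX n \<delta> \<Longrightarrow> \<delta> = pone" using main[OF finV] by blast
qed

definition F :: "nat \<Rightarrow> (nat \<Rightarrow> 'a list \<Rightarrow> 'a list) set" where
  "F n = {\<gamma>\<in>\<Gamma>. \<forall>i<k. \<gamma> i \<in> Ln D D' (Suc n)}"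

lemma F_bound:
  assumes mp: "\<forall>\<delta>\<in>\<Gamma>. \<delta> \<in> Vnbhd D k m \<longrightarrow> \<delta> = pone" and mn: "m \<le> n"
  shows "finite (F n)" "card (F n) \<le> card D' ^ (k * card (lev n :: 'a list set))"
proof -
  define Idx0 where "Idx0 = {..<k} \<times> (lev n :: 'a list set)"
  define \<Psi> where "\<Psi> = (\<lambda>\<gamma> :: nat \<Rightarrow> 'a list \<Rightarrow> 'a list. restrict (\<lambda>p. local_perm (\<gamma> (fst p)) (snd p)) Idx0)"
  have finI: "finite Idx0" unfolding Idx0_def using finite_lev by blast
  have cI: "card Idx0 = k * card (lev n :: 'a list set)" unfolding Idx0_def by (simp add: card_cartesian_product)
  have img: "\<Psi> ` F n \<subseteq> Pi\<^sub>E Idx0 (\<lambda>_. D')"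
  proof
    fix f assume "f \<in> \<Psi> ` F n"
    then obtain \<gamma> where g: "\<gamma> \<in> F n" "f = \<Psi> \<gamma>" by blast
    have "local_perm (\<gamma> (fst p)) (snd p) \<in> D'" if "p \<in> Idx0" for p
      using g(1) that unfolding F_def Idx0_def Ln_def by auto
    then show "f \<in> Pi\<^sub>E Idx0 (\<lambda>_. D')" using g(2) unfolding \<Psi>_def by auto
  qed
  have inj: "inj_on \<Psi> (F n)"
  proof
    fix \<gamma> \<gamma>' assume g: "\<gamma> \<in> F n" "\<gamma>' \<in> F n" and e: "\<Psi> \<gamma> = \<Psi> \<gamma>'"
    have t: "tree_aut (\<gamma> i)" "tree_aut (\<gamma>' i)" if "i < k" for i
      using g that unfolding F_def by (auto intro: Ln_tree_aut)
    have lp: "local_perm (\<gamma> i) w = local_perm (\<gamma>' i) w" if "i < k" "length w < n" for i w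
    proof -
      have "(i, w) \<in> Idx0" using that by (simp add: Idx0_def lev_def)
      then show ?thesis using fun_cong[OF e, of "(i,w)"] unfolding \<Psi>_def by simp
    qed
    have ag: "\<gamma> i w = \<gamma>' i w" if "i < k" "length w \<le> n" for i w
      using agree[OF t[OF that(1)]] lp[OF that(1)] that(2) by blast
    define \<delta> where "\<delta> = pmult (pinv \<gamma>) \<gamma>'"
    have dG: "\<delta> \<in> \<Gamma>" unfolding \<delta>_def using g G_mult G_inv unfolding F_def by blast
    have "FX n \<delta>" unfolding FX_def
    proof (intro allI impI conjI)
      fix i and w :: "'a list" assume i: "i < k"
      have "\<gamma> i \<in> Ln D D' (Suc n)" "\<gamma>' i \<in> Ln D D' (Suc n)" using g i unfolding F_def by auto
      then show "\<delta> i \<in> Ln D D' (Suc n)" unfolding \<delta>_def pmult_apply pinv_apply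
        using Ln_comp[OF pgD pgD'] Ln_inv[OF pgD pgD'] by blast
      assume "length w \<le> n"
      then have "\<gamma>' i w = \<gamma> i w" using ag i by simp
      then show "\<delta> i w = w" unfolding \<delta>_def using tree_aut_bij[OF t(1)[OF i]]
        by (simp add: bij_is_inj)
    qed
    then have "\<delta> = pone" using kernel_trivial[OF mp mn] dG by blast
    then have "inv (\<gamma> i) \<circ> \<gamma>' i = id" for i unfolding \<delta>_def by (metis pmult_apply pinv_apply pone_apply)
    moreover have "bij (\<gamma> i)" for i using g G_Lpow Lpow_bij unfolding F_def by blast
    ultimately show "\<gamma> = \<gamma>'" using inv_comp_id by (metis ext)
  qed
  have finP: "finite (Pi\<^sub>E Idx0 (\<lambda>_. D'))" using finI by (simp add: finite_PiE)
  show "finite (F n)" using inj_on_finite[OF inj img finP] .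
  have "card (F n) \<le> card (Pi\<^sub>E Idx0 (\<lambda>_. D'))" using card_inj_on_le[OF inj img finP] .
  also have "\<dots> = card D' ^ card Idx0" using finI by (simp add: card_PiE)
  finally show "card (F n) \<le> card D' ^ (k * card (lev n :: 'a list set))" using cI by simp
qed

lemma R_exists:
  assumes QD': "Q \<subseteq> D'" and finQ: "finite Q"
    and Qp: "\<forall>q1\<in>Q. \<forall>q2\<in>Q. \<forall>\<delta>\<in>D. q2 = q1 \<circ> \<delta> \<longrightarrow> q1 = q2"
  shows "\<exists>R. R \<subseteq> Lpow D D' k \<and> (\<forall>r\<in>R. \<forall>i<k. r i \<in> Ln D D' (Suc n)) \<and> finite R \<and>
           card R = card Q ^ (k * card (lev (Suc n) :: 'a list set)) \<and>
           (\<forall>r\<in>R. \<forall>r'\<in>R. \<forall>u\<in>Vnbhd D k 0. r' = pmult r u \<longrightarrow> r = r')"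
proof -
  define Idx where "Idx = {..<k} \<times> (lev (Suc n) :: 'a list set)"
  define PC where "PC = Pi\<^sub>E Idx (\<lambda>_. Q)"
  define \<tau> where "\<tau> c i = (\<lambda>w :: 'a list. if length w \<le> n then c (i, w) else id)"
    for c :: "nat \<times> 'a list \<Rightarrow> 'a \<Rightarrow> 'a" and i
  define gc where "gc c = (\<lambda>i. if i < k then port (\<tau> c i) else id)" for c
  have finI: "finite Idx" unfolding Idx_def using finite_lev by blast
  have inIdx: "(i, w) \<in> Idx \<longleftrightarrow> i < k \<and> length w \<le> n" for i w
    by (auto simp: Idx_def lev_def)
  have tbij: "bij (\<tau> c i w)" if "c \<in> PC" "i < k" for c i w
  proof (cases "length w \<le> n")
    case True
    then have "c (i, w) \<in> D'" using that QD' inIdx unfolding PC_def by auto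
    then show ?thesis using perm_groupD(1)[OF pgD'] True unfolding \<tau>_def by simp
  next
    case False then show ?thesis unfolding \<tau>_def by simp
  qed
  have gta: "tree_aut (gc c i)" and glp: "local_perm (gc c i) w = \<tau> c i w"
    if "c \<in> PC" "i < k" for c i w
    using port_tree_aut[OF tbij[OF that]] port_local_perm that unfolding gc_def by auto
  have gLn: "gc c i \<in> Ln D D' (Suc n)" if "c \<in> PC" "i < k" for c i
    unfolding Ln_def
  proof (intro CollectI conjI allI impI)
    show "tree_aut (gc c i)" using gta[OF that] .
    fix w :: "'a list"
    show "local_perm (gc c i) w \<in> D'"
      using glp[OF that] that QD' inIdx perm_groupD(2)[OF pgD'] unfolding PC_def \<tau>_def by auto
    assume "Suc n \<le> length w"
    then show "local_perm (gc c i) w \<in> D"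
      using glp[OF that] perm_groupD(2)[OF pgD] unfolding \<tau>_def by simp
  qed
  have key: "c = c'" if c: "c \<in> PC" "c' \<in> PC" and u: "u \<in> Vnbhd D k 0"
    and e: "gc c' = pmult (gc c) u" for c c' u
  proof (rule ccontr)
    assume "c \<noteq> c'"
    then obtain p where "p \<in> Idx" "c p \<noteq> c' p" using PiE_ext[of c Idx "\<lambda>_. Q" c'] c unfolding PC_def by metis
    then obtain i w0 where i: "i < k" and "length w0 \<le> n \<and> c (i, w0) \<noteq> c' (i, w0)"
      using inIdx by (cases p) auto
    then obtain w where P: "length w \<le> n \<and> c (i, w) \<noteq> c' (i, w)"
      and minw: "\<And>y. length y \<le> n \<and> c (i, y) \<noteq> c' (i, y) \<Longrightarrow> length w \<le> length y"
      using ex_has_least_nat[of "\<lambda>w. length w \<le> n \<and> c (i, w) \<noteq> c' (i, w)" w0 length] by blast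
    have "port (\<tau> c i) w = port (\<tau> c' i) w"
    proof (rule port_cong)
      fix j assume j: "j < length w"
      then have lt: "length (take j w) < length w" by simp
      then have "c (i, take j w) = c' (i, take j w)" using minw[of "take j w"] P by fastforce
      then show "\<tau> c i (take j w) = \<tau> c' i (take j w)" unfolding \<tau>_def by simp
    qed
    then have eqw: "gc c i w = gc c' i w" using i unfolding gc_def by simp
    have ui: "u i \<in> L0 D" using u i unfolding Vnbhd_def by blast
    then have tu: "tree_aut (u i)" and su: "local_perm (u i) w \<in> D" unfolding L0_def by auto
    have comp: "gc c' i = gc c i \<circ> u i" using fun_cong[OF e, of i] by simp
    then have "gc c i (u i w) = gc c i w" using eqw by simp
    then have uw: "u i w = w" using tree_aut_bij[OF gta[OF c(1) i]] by (simp add: bij_is_inj inj_eq)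
    have "local_perm (gc c' i) w = local_perm (gc c i) (u i w) \<circ> local_perm (u i) w"
      unfolding comp by (rule local_perm_comp[OF gta[OF c(1) i] tu])
    then have "c' (i, w) = c (i, w) \<circ> local_perm (u i) w"
      using glp[OF c(1) i] glp[OF c(2) i] uw P unfolding \<tau>_def by simp
    moreover have cQ: "c (i, w) \<in> Q" "c' (i, w) \<in> Q" using c P i inIdx unfolding PC_def by auto
    ultimately have "c (i, w) = c' (i, w)" using Qp su cQ by (meson)
    then show False using P by blast
  qed
  have pone0: "pone \<in> Vnbhd D k 0"
    unfolding Vnbhd_def L0_Ln using Ln_id[OF pgD pgD] by simp
  have injg: "inj_on gc PC"
  proof
    fix c c' assume "c \<in> PC" "c' \<in> PC" "gc c = gc c'"
    then show "c = c'" using key[of c c' pone] pone0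
      by (metis pmult_apply pone_apply comp_id ext)
  qed
  define R where "R = gc ` PC"
  show ?thesis
  proof (intro exI conjI ballI allI impI)
    show "R \<subseteq> Lpow D D' k"
    proof
      fix r assume "r \<in> R"
      then obtain c where "c \<in> PC" "r = gc c" unfolding R_def by blast
      then show "r \<in> Lpow D D' k" unfolding Lpow_def LDD_def using gLn
        by (auto simp: gc_def)
    qed
    show "\<And>r i. r \<in> R \<Longrightarrow> i < k \<Longrightarrow> r i \<in> Ln D D' (Suc n)"
      unfolding R_def using gLn by blast
    show "finite R" unfolding R_def PC_def using finI finQ by (simp add: finite_PiE)
    have "card R = card PC" unfolding R_def using card_image[OF injg] .
    also have "\<dots> = card Q ^ card Idx" unfolding PC_def using finI by (simp add: card_PiE)
    also have "card Idx = k * card (lev (Suc n) :: 'a list set)" unfolding Idx_def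
      by (simp add: card_cartesian_product)
    finally show "card R = card Q ^ (k * card (lev (Suc n) :: 'a list set))" .
    fix r r' u assume "r \<in> R" "r' \<in> R" "u \<in> Vnbhd D k 0" "r' = pmult r u"
    then obtain c c' where cc: "c \<in> PC" "c' \<in> PC" "r = gc c" "r' = gc c'" unfolding R_def by blast
    then have "c = c'" using key[OF cc(1,2) \<open>u \<in> Vnbhd D k 0\<close>] \<open>r' = pmult r u\<close> by simp
    then show "r = r'" using cc by simp
  qed
qed

lemma mass_bound:
  assumes finF: "finite (F n)"
    and RL: "R \<subseteq> Lpow D D' k" and RLn: "\<forall>r\<in>R. \<forall>i<k. r i \<in> Ln D D' (Suc n)"
    and finR: "finite R"
    and Rd: "\<forall>r\<in>R. \<forall>r'\<in>R. \<forall>u\<in>Vnbhd D k 0. r' = pmult r u \<longrightarrow> r = r'"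
    and r0: "r0 \<in> R"
  shows "real (card {r\<in>R. dcoset D k \<Gamma> r = dcoset D k \<Gamma> r0}) / real (card (F n))
           \<le> dcoset_mass D D' k \<Gamma> (dcoset D k \<Gamma> r0)"
proof -
  define V0 where "V0 = Vnbhd D k 0"
  define C where "C = dcoset D k \<Gamma> r0"
  define RC where "RC = {r\<in>R. dcoset D k \<Gamma> r = C}"
  define g0 where "g0 = (SOME g. g \<in> Lpow D D' k \<and> C = dcoset D k \<Gamma> g)"
  have "\<exists>g. g \<in> Lpow D D' k \<and> C = dcoset D k \<Gamma> g" using r0 RL unfolding C_def by blast
  then have "g0 \<in> Lpow D D' k \<and> C = dcoset D k \<Gamma> g0" unfolding g0_def by (rule someI_ex)
  then have g0: "g0 \<in> Lpow D D' k" "C = dcoset D k \<Gamma> g0" by auto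
  define Stab where "Stab = \<Gamma> \<inter> (\<lambda>u. pmult (pmult g0 u) (pinv g0)) ` V0"
  have mass: "dcoset_mass D D' k \<Gamma> C = 1 / real (card Stab)"
    unfolding dcoset_mass_def Let_def Stab_def V0_def g0_def by simp
  have pone0: "pone \<in> V0"
    unfolding V0_def Vnbhd_def L0_Ln using Ln_id[OF pgD pgD] by simp
  have bg0: "bij (g0 i)" for i using Lpow_bij g0(1) .
  have selfd: "r \<in> dcoset D k \<Gamma> r" for r
    unfolding dcoset_def using G_one pone0[unfolded V0_def] by (force intro!: exI[of _ pone])
  have "\<forall>r\<in>RC. \<exists>p. fst p \<in> \<Gamma> \<and> snd p \<in> V0 \<and> r = pmult (pmult (fst p) g0) (snd p)"
  proof
    fix r assume "r \<in> RC"
    then have "r \<in> dcoset D k \<Gamma> g0" using selfd[of r] g0(2) unfolding RC_def by simp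
    then show "\<exists>p. fst p \<in> \<Gamma> \<and> snd p \<in> V0 \<and> r = pmult (pmult (fst p) g0) (snd p)"
      unfolding dcoset_def V0_def by auto
  qed
  then obtain P where P: "\<And>r. r \<in> RC \<Longrightarrow> fst (P r) \<in> \<Gamma> \<and> snd (P r) \<in> V0 \<and> r = pmult (pmult (fst (P r)) g0) (snd (P r))"
    by metis
  define \<gamma> where "\<gamma> r = fst (P r)" for r
  define u where "u r = snd (P r)" for r
  have gG: "\<gamma> r \<in> \<Gamma>" and uV: "u r \<in> V0" and req: "\<And>i. r i = \<gamma> r i \<circ> g0 i \<circ> u r i"
    if "r \<in> RC" for r using P[OF that] unfolding \<gamma>_def u_def by (metis pmult_apply)+
  have bgam: "bij (\<gamma> r i)" if "r \<in> RC" for r i using Lpow_bij G_Lpow gG[OF that] by blast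
  have bu: "bij (u r i)" if "r \<in> RC" for r i using V_bij uV[OF that] unfolding V0_def by blast
  have br: "bij (r i)" if "r \<in> RC" for r i using that RL Lpow_bij unfolding RC_def by blast
  have gam: "\<gamma> r i = r i \<circ> inv (u r i) \<circ> inv (g0 i)" if "r \<in> RC" for r i
    using req[OF that, of i] bu[OF that] bg0 by (simp add: comp_assoc comp_inv_cancel bij_comp_inv)
  have "\<forall>s\<in>Stab. \<exists>v. v \<in> V0 \<and> s = pmult (pmult g0 v) (pinv g0)" unfolding Stab_def by blast
  then obtain vs where vs: "\<And>s. s \<in> Stab \<Longrightarrow> vs s \<in> V0 \<and> s = pmult (pmult g0 (vs s)) (pinv g0)"
    by metis
  have seq: "s i = g0 i \<circ> vs s i \<circ> inv (g0 i)" if "s \<in> Stab" for s i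
    using vs[OF that] by (metis pmult_apply pinv_apply)
  have bv: "bij (vs s i)" if "s \<in> Stab" for s i using V_bij vs[OF that] unfolding V0_def by blast
  have r0RC: "r0 \<in> RC" unfolding RC_def C_def using r0 by simp
  define \<Phi> where "\<Phi> p = pmult (pmult (\<gamma> (fst p)) (snd p)) (pinv (\<gamma> r0))" for p
  have LnV: "v i \<in> Ln D D' (Suc n)" if "v \<in> V0" "i < k" for v i
    using V_L0[OF that[unfolded V0_def]] L0_sub_Ln[OF DD'] by blast
  have img: "\<Phi> ` (RC \<times> Stab) \<subseteq> F n"
  proof
    fix x assume "x \<in> \<Phi> ` (RC \<times> Stab)"
    then obtain r s where rs: "r \<in> RC" "s \<in> Stab" "x = \<Phi> (r, s)" by auto
    have sG: "s \<in> \<Gamma>" using rs(2) unfolding Stab_def by blast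
    have xG: "x \<in> \<Gamma>" unfolding rs(3) \<Phi>_def using G_mult G_inv gG rs(1) r0RC sG by simp
    have "x i \<in> Ln D D' (Suc n)" if i: "i < k" for i
    proof -
      have "inv (\<gamma> r0 i) = g0 i \<circ> u r0 i \<circ> inv (r0 i)"
        unfolding gam[OF r0RC]
        using br[OF r0RC] bu[OF r0RC] bg0
        by (simp add: o_inv_distrib bij_imp_bij_inv bij_comp inv_inv_eq bij_is_inj comp_assoc)
      then have "x i = r i \<circ> inv (u r i) \<circ> vs s i \<circ> u r0 i \<circ> inv (r0 i)"
        unfolding rs(3) \<Phi>_def using gam[OF rs(1)] seq[OF rs(2)] bg0
        by (simp add: comp_assoc inv_comp_cancel)
      moreover have "r i \<in> Ln D D' (Suc n)" "r0 i \<in> Ln D D' (Suc n)"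
        using RLn rs(1) r0RC i unfolding RC_def by auto
      moreover have "u r i \<in> Ln D D' (Suc n)" "u r0 i \<in> Ln D D' (Suc n)" "vs s i \<in> Ln D D' (Suc n)"
        using LnV uV rs r0RC vs i by auto
      ultimately show ?thesis using Ln_comp[OF pgD pgD'] Ln_inv[OF pgD pgD'] by simp
    qed
    then show "x \<in> F n" unfolding F_def using xG by blast
  qed
  have inj: "inj_on \<Phi> (RC \<times> Stab)"
  proof
    fix p p' assume p: "p \<in> RC \<times> Stab" "p' \<in> RC \<times> Stab" and e: "\<Phi> p = \<Phi> p'"
    obtain r s r' s' where pp: "p = (r, s)" "p' = (r', s')" by fastforce
    have rs: "r \<in> RC" "s \<in> Stab" "r' \<in> RC" "s' \<in> Stab" using p pp by auto
    have e2: "\<gamma> r i \<circ> s i = \<gamma> r' i \<circ> s' i" for i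
    proof -
      have "\<gamma> r i \<circ> s i \<circ> inv (\<gamma> r0 i) = \<gamma> r' i \<circ> s' i \<circ> inv (\<gamma> r0 i)"
        using fun_cong[OF e, of i] unfolding pp \<Phi>_def by simp
      then have "\<gamma> r i \<circ> s i \<circ> inv (\<gamma> r0 i) \<circ> \<gamma> r0 i = \<gamma> r' i \<circ> s' i \<circ> inv (\<gamma> r0 i) \<circ> \<gamma> r0 i"
        by simp
      then show ?thesis using bgam[OF r0RC, of i] by (simp add: comp_assoc bij_inv_comp)
    qed
    define w where "w i = inv (u r i) \<circ> vs s i \<circ> inv (vs s' i) \<circ> u r' i" for i
    have wV: "w \<in> V0"
    proof -
      have "w i \<in> L0 D" if i: "i < k" for i
      proof -
        have "u r i \<in> L0 D" "u r' i \<in> L0 D" "vs s i \<in> L0 D" "vs s' i \<in> L0 D"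
          using V_L0[OF _ i] uV[OF rs(1)] uV[OF rs(3)] vs[OF rs(2)] vs[OF rs(4)] unfolding V0_def by auto
        then show ?thesis unfolding w_def L0_Ln using Ln_comp[OF pgD pgD] Ln_inv[OF pgD pgD] by simp
      qed
      moreover have "w i = id" if i: "k \<le> i" for i
      proof -
        have "u r i = id" "u r' i = id" using V_id[OF _ i] uV[OF rs(1)] uV[OF rs(3)] unfolding V0_def by auto
        moreover have "vs s i = id" "vs s' i = id" using V_id[OF _ i] vs[OF rs(2)] vs[OF rs(4)] unfolding V0_def by auto
        ultimately show ?thesis unfolding w_def by simp
      qed
      moreover have "f [] = []" if "f \<in> L0 D" for f using that by (simp add: L0_def tree_aut_def)
      ultimately show ?thesis unfolding V0_def Vnbhd_def by simp
    qed
    have "r' = pmult r w"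
    proof (rule ext)
      fix i
      have A: "\<gamma> r i \<circ> (g0 i \<circ> (vs s i \<circ> h)) = \<gamma> r i \<circ> (s i \<circ> (g0 i \<circ> h))" for h
        using seq[OF rs(2), of i] bg0[of i] by (simp add: comp_assoc inv_comp_cancel)
      have B: "\<gamma> r' i \<circ> (g0 i \<circ> (vs s' i \<circ> h)) = \<gamma> r' i \<circ> (s' i \<circ> (g0 i \<circ> h))" for h
        using seq[OF rs(4), of i] bg0[of i] by (simp add: comp_assoc inv_comp_cancel)
      have "pmult r w i = \<gamma> r i \<circ> (g0 i \<circ> (vs s i \<circ> (inv (vs s' i) \<circ> u r' i)))"
        unfolding w_def pmult_apply req[OF rs(1), of i] using bu[OF rs(1), of i]
        by (simp add: comp_assoc comp_inv_cancel)
      also have "\<dots> = \<gamma> r i \<circ> (s i \<circ> (g0 i \<circ> (inv (vs s' i) \<circ> u r' i)))" by (rule A)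
      also have "\<dots> = \<gamma> r' i \<circ> (s' i \<circ> (g0 i \<circ> (inv (vs s' i) \<circ> u r' i)))"
        using e2[of i] by (metis comp_assoc)
      also have "\<dots> = \<gamma> r' i \<circ> (g0 i \<circ> (vs s' i \<circ> (inv (vs s' i) \<circ> u r' i)))" by (rule B[symmetric])
      also have "\<dots> = r' i" unfolding req[OF rs(3), of i] using bv[OF rs(4), of i]
        by (simp add: comp_assoc comp_inv_cancel)
      finally show "r' i = pmult r w i" by simp
    qed
    moreover have "r \<in> R" "r' \<in> R" using rs unfolding RC_def by auto
    ultimately have rr: "r = r'" using Rd wV unfolding V0_def by metis
    have "s i = s' i" for i
    proof -
      have "inv (\<gamma> r i) \<circ> (\<gamma> r i \<circ> s i) = inv (\<gamma> r i) \<circ> (\<gamma> r i \<circ> s' i)"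
        using e2[of i] rr by simp
      then show ?thesis using bgam[OF rs(1), of i] by (simp add: inv_comp_cancel)
    qed
    then show "p = p'" using pp rr by (simp add: ext)
  qed
  have finRC: "finite RC" using finR unfolding RC_def by simp
  have finRS: "finite (RC \<times> Stab)" using inj_on_finite[OF inj img finF] .
  have finS: "finite Stab" using finRS r0RC finite_cartesian_product_iff[of RC Stab] by auto
  have oneS: "pone \<in> Stab" unfolding Stab_def using G_one pone0 bg0
    by (force intro!: image_eqI[of _ _ pone] ext simp: bij_comp_inv)
  have cS: "card Stab > 0" using finS oneS card_gt_0_iff by auto
  have "\<Phi> (r0, pone) \<in> F n" using img r0RC oneS by auto
  then have cF: "card (F n) > 0" using finF card_gt_0_iff by auto
  have "card RC * card Stab \<le> card (F n)"
    using card_inj_on_le[OF inj img finF] by (simp add: card_cartesian_product)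
  then have "real (card RC) * real (card Stab) \<le> real (card (F n))" by (metis of_nat_le_iff of_nat_mult)
  then have "real (card RC) / real (card (F n)) \<le> 1 / real (card Stab)"
    using cS cF by (simp add: field_simps)
  then show ?thesis using mass unfolding RC_def C_def by simp
qed

lemma covol_bound:
  assumes mp: "\<forall>\<delta>\<in>\<Gamma>. \<delta> \<in> Vnbhd D k m \<longrightarrow> \<delta> = pone" and mn: "m \<le> n"
    and QD': "Q \<subseteq> D'" and finQ: "finite Q"
    and Qp: "\<forall>q1\<in>Q. \<forall>q2\<in>Q. \<forall>\<delta>\<in>D. q2 = q1 \<circ> \<delta> \<longrightarrow> q1 = q2"
    and summ: "dcoset_mass D D' k \<Gamma> summable_on dcosets D D' k \<Gamma>"
  shows "real (card Q ^ (k * card (lev (Suc n) :: 'a list set))) / real (card D' ^ (k * card (lev n :: 'a list set)))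
         \<le> infsum (dcoset_mass D D' k \<Gamma>) (dcosets D D' k \<Gamma>)"
proof -
  obtain R where R: "R \<subseteq> Lpow D D' k" "\<forall>r\<in>R. \<forall>i<k. r i \<in> Ln D D' (Suc n)" "finite R"
    "card R = card Q ^ (k * card (lev (Suc n) :: 'a list set))"
    "\<forall>r\<in>R. \<forall>r'\<in>R. \<forall>u\<in>Vnbhd D k 0. r' = pmult r u \<longrightarrow> r = r'"
    using R_exists[OF QD' finQ Qp, of n] by blast
  have finF: "finite (F n)" and cardF: "card (F n) \<le> card D' ^ (k * card (lev n :: 'a list set))"
    using F_bound[OF mp mn] by auto
  have "pone \<in> F n" unfolding F_def using G_one Ln_id[OF pgD pgD'] by simp
  then have cF: "card (F n) > 0" using finF card_gt_0_iff by auto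
  define h where "h = dcoset D k \<Gamma>"
  have "real (card R) = (\<Sum>r\<in>R. 1)" by simp
  also have "\<dots> = (\<Sum>C\<in>h ` R. \<Sum>r\<in>{x\<in>R. h x = C}. 1)"
    by (rule sum.image_gen[OF R(3)])
  also have "\<dots> = (\<Sum>C\<in>h ` R. real (card {x\<in>R. h x = C}))" by simp
  finally have cR: "real (card R) = (\<Sum>C\<in>h ` R. real (card {x\<in>R. h x = C}))" .
  have "real (card R) / real (card (F n)) = (\<Sum>C\<in>h ` R. real (card {x\<in>R. h x = C}) / real (card (F n)))"
    unfolding cR by (simp add: sum_divide_distrib)
  also have "\<dots> \<le> (\<Sum>C\<in>h ` R. dcoset_mass D D' k \<Gamma> C)"
  proof (rule sum_mono)
    fix C assume "C \<in> h ` R"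
    then obtain r0 where r0: "r0 \<in> R" "C = h r0" by blast
    show "real (card {x\<in>R. h x = C}) / real (card (F n)) \<le> dcoset_mass D D' k \<Gamma> C"
      using mass_bound[OF finF R(1,2,3,5) r0(1)] r0(2) unfolding h_def by simp
  qed
  also have "\<dots> \<le> infsum (dcoset_mass D D' k \<Gamma>) (dcosets D D' k \<Gamma>)"
  proof (rule finite_sum_le_infsum[OF summ])
    show "finite (h ` R)" using R(3) by simp
    show "h ` R \<subseteq> dcosets D D' k \<Gamma>" unfolding h_def dcosets_def using R(1) by blast
    fix x show "0 \<le> dcoset_mass D D' k \<Gamma> x" unfolding dcoset_mass_def Let_def by simp
  qed
  finally have main: "real (card R) / real (card (F n)) \<le> infsum (dcoset_mass D D' k \<Gamma>) (dcosets D D' k \<Gamma>)" .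
  have "real (card Q ^ (k * card (lev (Suc n) :: 'a list set))) / real (card D' ^ (k * card (lev n :: 'a list set)))
        \<le> real (card R) / real (card (F n))"
    by (rule frac_le) (use R(4) cF cardF in auto)
  then show ?thesis using main by linarith
qed

end

theorem mainTheorem19:
  fixes D D' :: "('a::finite \<Rightarrow> 'a) set" and k :: nat
  assumes "CARD('a) \<ge> 2"
    and "perm_group D" and "perm_group D'" and "D \<subseteq> D'"
    and "essential_subgroup D D'"
    and "card D' < (card D' div card D) ^ CARD('a)"
    and "k \<ge> 1"
  shows "\<not> (\<exists>\<Gamma>. is_lattice D D' k \<Gamma>)"
proof
  assume "\<exists>\<Gamma>. is_lattice D D' k \<Gamma>"
  then obtain \<Gamma> where L: "is_subgroup D D' k \<Gamma>" "is_discrete D D' k \<Gamma>" "finite_covolume D D' k \<Gamma>"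
    unfolding is_lattice_def by blast
  interpret ctx D D' k \<Gamma> by (rule ctx.intro[OF assms(2,3,4,5) L(1)])
  obtain m where mp: "\<forall>\<delta>\<in>\<Gamma>. \<delta> \<in> Vnbhd D k m \<longrightarrow> \<delta> = pone"
    using discrete_nbhd[OF L(1,2)] by blast
  obtain Q where Q: "Q \<subseteq> D'" "finite Q" "card D' div card D \<le> card Q"
    "\<forall>q1\<in>Q. \<forall>q2\<in>Q. \<forall>\<delta>\<in>D. q2 = q1 \<circ> \<delta> \<longrightarrow> q1 = q2"
    using coset_reps[OF assms(2,3,4)] by blast
  have summ: "dcoset_mass D D' k \<Gamma> summable_on dcosets D D' k \<Gamma>"
    using L(3) unfolding finite_covolume_def .
  define S where "S = infsum (dcoset_mass D D' k \<Gamma>) (dcosets D D' k \<Gamma>)"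
  define d where "d = card D'"
  define q where "q = card Q"
  define l where "l = CARD('a)"
  have finD': "finite D'" by simp
  have dpos: "d > 0" unfolding d_def card_gt_0_iff using finD' perm_groupD(2)[OF assms(3)] by blast
  have "d < (card D' div card D) ^ l" using assms(6) unfolding d_def l_def .
  also have "\<dots> \<le> q ^ l" unfolding q_def using Q(3) by (simp add: power_mono)
  finally have dq: "d + 1 \<le> q ^ l" by simp
  have lpos: "l > 0" unfolding l_def by simp
  have qpos: "q \<ge> 1"
  proof (rule ccontr)
    assume "\<not> 1 \<le> q"
    then have "q = 0" by simp
    then have "q ^ l = 0" using lpos by simp
    with dq show False by simp
  qed
  define n where "n = max m (nat \<lceil>S * real d\<rceil> + 1)"
  have mn: "m \<le> n" unfolding n_def by simp
  define A where "A = card (lev n :: 'a list set)"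
  define M where "M = k * A"
  have An: "n \<le> A" unfolding A_def by (rule card_lev_ge)
  have MA: "A \<le> M" unfolding M_def using assms(7) by simp
  have lev1: "card (lev (Suc n) :: 'a list set) = 1 + l * A" unfolding A_def l_def by (rule card_lev_Suc)
  have B: "real (q ^ (k * (1 + l * A))) / real (d ^ M) \<le> S"
    using covol_bound[OF mp mn Q(1,2,4) summ] unfolding S_def q_def d_def M_def A_def lev1[unfolded A_def] .
  have "(d + 1) ^ M \<le> (q ^ l) ^ M" using dq by (rule power_mono) simp
  also have "\<dots> = q ^ (l * M)" by (simp add: power_mult)
  also have "\<dots> \<le> q ^ (k * (1 + l * A))"
  proof (rule power_increasing)
    show "l * M \<le> k * (1 + l * A)" unfolding M_def by (simp add: algebra_simps)
  qed (rule qpos)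
  finally have "real ((d + 1) ^ M) \<le> real (q ^ (k * (1 + l * A)))" by (simp only: of_nat_le_iff)
  then have "real ((d + 1) ^ M) / real (d ^ M) \<le> real (q ^ (k * (1 + l * A))) / real (d ^ M)"
    by (rule divide_right_mono) simp
  with B have C: "real ((d + 1) ^ M) / real (d ^ M) \<le> S" by linarith
  have E: "real ((d + 1) ^ M) / real (d ^ M) = (1 + 1 / real d) ^ M"
  proof -
    have "1 + 1 / real d = real (d + 1) / real d" using dpos by (simp add: field_simps)
    then show ?thesis by (simp add: power_divide)
  qed
  have Be: "1 + real M * (1 / real d) \<le> (1 + 1 / real d) ^ M"
  proof (rule Bernoulli_inequality)
    have "0 \<le> 1 / real d" by simp
    then show "- 1 \<le> 1 / real d" by linarith
  qed
  have "1 + real M / real d \<le> S" using C E Be by simp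
  then have "real M / real d \<le> S" by linarith
  then have "real M \<le> S * real d" using dpos by (simp add: divide_le_eq)
  moreover have "real n \<le> real M" using An MA by simp
  moreover have "S * real d < real n" unfolding n_def by linarith
  ultimately show False by linarith
qed

end
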